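(* Let $N\in\mathbb{N}=\{1,2,\ldots\}$. (i) For any $k\in\mathbb{Z}_+=\{0,1,2,\ldots\}$ and $s\in\mathbb{R}$, there exists a constant $\gamma_N^{s,k}\ge 0$ such that $$\bigl(|x|_N^{k-s}\,|\nabla_N^k[|x|_N^s]|_{N^k}\bigr)^2=\gamma_N^{s,k}\quad\text{for all } x\in\mathbb{R}^N\setminus\{0\}.$$ (ii) For any $k\in\mathbb{N}$, there exists a constant $\ell_N^k>0$ such that $$\bigl(|x|_N^{k}\,|\nabla_N^k[\log|x|_N]|_{N^k}\bigr)^2=\ell_N^k\quad\text{for all } x\in\mathbb{R}^N\setminus\{0\}.$$
   Context: $|x|_N=(x_1^2+\cdots+x_N^2)^{1/2}$ is the Euclidean norm on $\mathbb{R}^N$; $\log$ is the natural logarithm. Let $I_N=\{1,\ldots,N\}$. For $i=(i_1,\ldots,i_k)\in I_N^k$ put $D_i=\frac{\partial}{\partial x_{i_1}}\cdots\frac{\partial}{\partial x_{i_k}}$. For a smooth real function $u$ on a domain $\Omega\subset\mathbb{R}^N$, $\nabla_N^k u(x)=(D_iu(x))_{i\in I_N^k}$ and $|\nabla_N^k u(x)|_{N^k}=\bigl(\sum_{i\in I_N^k}(D_iu(x))^2\bigr)^{1/2}$ (sum over all ordered $k$-tuples of indices); for $k=0$, $|\nabla_N^0u(x)|_1=|u(x)|$. *)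

theory Defs
  imports "HOL-Analysis.Analysis"
begin

definition partial_coord :: "'n::finite \<Rightarrow> (real^'n \<Rightarrow> real) \<Rightarrow> real^'n \<Rightarrow> real" where
  "partial_coord i f x = deriv (\<lambda>t. f (x + t *\<^sub>R axis i 1)) 0"

fun Dmulti :: "'n::finite list \<Rightarrow> (real^'n \<Rightarrow> real) \<Rightarrow> real^'n \<Rightarrow> real" where
  "Dmulti [] f = f"
| "Dmulti (i # is) f = partial_coord i (Dmulti is f)"

definition grad_norm :: "nat \<Rightarrow> (real^'n::finite \<Rightarrow> real) \<Rightarrow> real^'n \<Rightarrow> real" where
  "grad_norm k f x = sqrt (\<Sum>is\<in>{is :: 'n list. length is = k}. (Dmulti is f x)\<^sup>2)"

end

theory Submission imports Defs begin

datatype 'n ex = C real | X 'n | P real | Lg | Ad "'n ex" "'n ex" | Mu "'n ex" "'n ex"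

fun ev :: "'n::finite ex \<Rightarrow> real^'n \<Rightarrow> real" where
  "ev (C c) x = c"
| "ev (X j) x = x $ j"
| "ev (P a) x = norm x powr a"
| "ev Lg x = ln (norm x)"
| "ev (Ad e1 e2) x = ev e1 x + ev e2 x"
| "ev (Mu e1 e2) x = ev e1 x * ev e2 x"

fun dx :: "'n::finite \<Rightarrow> 'n ex \<Rightarrow> 'n ex" where
  "dx i (C c) = C 0"
| "dx i (X j) = C (if i = j then 1 else 0)"
| "dx i (P a) = Mu (C a) (Mu (X i) (P (a - 2)))"
| "dx i Lg = Mu (X i) (P (-2))"
| "dx i (Ad e1 e2) = Ad (dx i e1) (dx i e2)"
| "dx i (Mu e1 e2) = Ad (Mu (dx i e1) e2) (Mu e1 (dx i e2))"

lemma inner_sum: "(x::real^'n::finite) \<bullet> h = (\<Sum>j\<in>UNIV. h$j * x$j)"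
  by (simp add: inner_vec_def mult.commute)

lemma ev_deriv:
  fixes x :: "real^'n::finite"
  assumes "x \<noteq> 0"
  shows "(ev e has_derivative (\<lambda>h. \<Sum>j\<in>UNIV. h$j * ev (dx j e) x)) (at x)"
proof (induction e)
  case (C c)
  then show ?case by simp
next
  case (X k)
  have "(\<lambda>h. \<Sum>j\<in>UNIV. h$j * ev (dx j (X k)) x) = (\<lambda>h::real^'n. h $ k)"
  proof
    fix h :: "real^'n"
    have e: "\<And>j. h$j * ev (dx j (X k)) x = (if j = k then h$j else 0)" by simp
    show "(\<Sum>j\<in>UNIV. h$j * ev (dx j (X k)) x) = h $ k"
      by (simp only: e) simp
  qed
  moreover have "((\<lambda>y::real^'n. y $ k) has_derivative (\<lambda>h. h $ k)) (at x)"
    by (rule bounded_linear.has_derivative[OF bounded_linear_vec_nth has_derivative_ident])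
  ultimately show ?case by simp
next
  case (P a)
  have n: "norm x > 0" using assms by simp
  have pa: "norm x powr (a - 2) = norm x powr a / (norm x)^2"
    using n by (simp add: powr_diff powr_realpow)
  have d1: "((\<lambda>y. norm y powr a) has_derivative (\<lambda>h. a * norm x powr (a - 2) * (x \<bullet> h))) (at x)"
    using has_derivative_norm[OF assms] n
    by (auto intro!: derivative_eq_intros simp: assms pa sgn_div_norm inner_commute power2_eq_square field_simps)
  have "(\<lambda>h. a * norm x powr (a - 2) * (x \<bullet> h)) = (\<lambda>h. \<Sum>j\<in>UNIV. h$j * ev (dx j (P a)) x)"
    by (simp add: inner_sum sum_distrib_left mult_ac)
  then show ?case using d1 by simp
next
  case Lg
  have n: "norm x > 0" using assms by simp
  have pa: "norm x powr (- 2) = 1 / (norm x)^2"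
    using n by (simp add: powr_minus powr_realpow divide_inverse)
  have d1: "((\<lambda>y. ln (norm y)) has_derivative (\<lambda>h. norm x powr (- 2) * (x \<bullet> h))) (at x)"
    using has_derivative_norm[OF assms] n
    by (auto intro!: derivative_eq_intros simp: assms pa sgn_div_norm inner_commute power2_eq_square field_simps)
  have "(\<lambda>h. norm x powr (- 2) * (x \<bullet> h)) = (\<lambda>h. \<Sum>j\<in>UNIV. h$j * ev (dx j Lg) x)"
    by (simp add: inner_sum sum_distrib_left mult_ac)
  then show ?case using d1 by simp
next
  case (Ad e1 e2)
  show ?case using has_derivative_add[OF Ad.IH]
    by (simp add: sum.distrib distrib_left)
next
  case (Mu e1 e2)
  have "((\<lambda>y. ev e1 y * ev e2 y) has_derivative
     (\<lambda>h. ev e1 x * (\<Sum>j\<in>UNIV. h$j * ev (dx j e2) x) + (\<Sum>j\<in>UNIV. h$j * ev (dx j e1) x) * ev e2 x)) (at x)"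
    by (rule has_derivative_mult[OF Mu.IH])
  moreover have "(\<lambda>h. ev e1 x * (\<Sum>j\<in>UNIV. h$j * ev (dx j e2) x) + (\<Sum>j\<in>UNIV. h$j * ev (dx j e1) x) * ev e2 x)
     = (\<lambda>h. \<Sum>j\<in>UNIV. h$j * ev (dx j (Mu e1 e2)) x)"
    by (simp add: sum_distrib_left sum_distrib_right sum.distrib[symmetric] algebra_simps)
  ultimately show ?case by simp
qed

lemma pc_local:
  fixes g h :: "real^'n::finite \<Rightarrow> real"
  assumes "open U" "x \<in> U" "\<And>y. y \<in> U \<Longrightarrow> g y = h y"
  shows "partial_coord i g x = partial_coord i h x"
  unfolding partial_coord_def
proof (rule deriv_cong_ev)
  have "((\<lambda>t::real. x + t *\<^sub>R axis i 1) \<longlongrightarrow> x + 0 *\<^sub>R axis i 1) (nhds 0)"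
    by (intro tendsto_intros filterlim_ident)
  then have "((\<lambda>t::real. x + t *\<^sub>R axis i 1) \<longlongrightarrow> x) (nhds 0)" by simp
  then have "eventually (\<lambda>t. x + t *\<^sub>R axis i 1 \<in> U) (nhds 0)"
    using assms(1,2) by (rule topological_tendstoD)
  then show "eventually (\<lambda>t. g (x + t *\<^sub>R axis i 1) = h (x + t *\<^sub>R axis i 1)) (nhds 0)"
    by eventually_elim (simp add: assms(3))
qed simp

lemma dir_deriv:
  fixes f :: "real^'n::finite \<Rightarrow> real"
  assumes "(f has_derivative f') (at x)"
  shows "((\<lambda>t. f (x + t *\<^sub>R v)) has_real_derivative f' v) (at 0)"
proof -
  have l: "linear f'" using assms has_derivative_linear by blast
  have "((\<lambda>t::real. x + t *\<^sub>R v) has_derivative (\<lambda>t. t *\<^sub>R v)) (at 0)"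
    by (auto intro!: derivative_eq_intros)
  moreover have "(f has_derivative f') (at (x + 0 *\<^sub>R v))" using assms by simp
  ultimately have "((\<lambda>t. f (x + t *\<^sub>R v)) has_derivative (\<lambda>t. f' (t *\<^sub>R v))) (at 0)"
    using has_derivative_compose[of "\<lambda>t::real. x + t *\<^sub>R v" "\<lambda>t. t *\<^sub>R v" 0 UNIV f f'] by (simp add: o_def)
  moreover have "(\<lambda>t. f' (t *\<^sub>R v)) = (*) (f' v)"
    using l by (auto simp: linear_scale mult.commute)
  ultimately show ?thesis by (simp add: has_field_derivative_def)
qed

lemma dir_deriv_sum:
  fixes f :: "real^'n::finite \<Rightarrow> real"
  assumes "(f has_derivative (\<lambda>h. \<Sum>j\<in>UNIV. h$j * g j)) (at x)"
  shows "((\<lambda>t. f (x + t *\<^sub>R v)) has_real_derivative (\<Sum>j\<in>UNIV. v$j * g j)) (at 0)"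
  using dir_deriv[OF assms] by simp

lemma pc_of_deriv:
  fixes f :: "real^'n::finite \<Rightarrow> real"
  assumes "(f has_derivative (\<lambda>h. \<Sum>j\<in>UNIV. h$j * g j)) (at x)"
  shows "partial_coord i f x = g i"
proof -
  have "((\<lambda>t. f (x + t *\<^sub>R axis i 1)) has_real_derivative (\<Sum>j\<in>UNIV. (axis i 1 :: real^'n)$j * g j)) (at 0)"
    by (rule dir_deriv_sum[OF assms])
  moreover have "(\<Sum>j\<in>UNIV. (axis i 1 :: real^'n)$j * g j) = g i"
  proof -
    have "\<And>j. (axis i 1 :: real^'n)$j * g j = (if j = i then g j else 0)" by (simp add: axis_def)
    then show ?thesis by simp
  qed
  ultimately show ?thesis unfolding partial_coord_def by (metis DERIV_imp_deriv)
qed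

fun dm :: "'n::finite list \<Rightarrow> 'n ex \<Rightarrow> 'n ex" where
  "dm [] e = e"
| "dm (i # is) e = dx i (dm is e)"

lemma ev_Dm: "(x::real^'n::finite) \<noteq> 0 \<Longrightarrow> Dmulti is (ev e) x = ev (dm is e) x"
proof (induction "is" arbitrary: x)
  case Nil
  then show ?case by simp
next
  case (Cons i "is")
  have "Dmulti (i # is) (ev e) x = partial_coord i (Dmulti is (ev e)) x" by simp
  also have "\<dots> = partial_coord i (ev (dm is e)) x"
    by (rule pc_local[of "-{0}"]) (use Cons in auto)
  also have "\<dots> = ev (dx i (dm is e)) x"
    by (rule pc_of_deriv[OF ev_deriv[OF Cons.prems]])
  finally show ?case by simp
qed

definition good :: "(real^'n::finite \<Rightarrow> real) \<Rightarrow> bool" where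
  "good f \<longleftrightarrow> (\<forall>is x. x \<noteq> 0 \<longrightarrow>
     (Dmulti is f has_derivative (\<lambda>h. \<Sum>j\<in>UNIV. h$j * Dmulti (j # is) f x)) (at x))"

lemma good_ev: "good (ev e)"
  unfolding good_def
proof (intro allI impI)
  fix "is" and x :: "real^'a"
  assume x: "x \<noteq> 0"
  have "(ev (dm is e) has_derivative (\<lambda>h. \<Sum>j\<in>UNIV. h$j * ev (dx j (dm is e)) x)) (at x)"
    by (rule ev_deriv[OF x])
  also have "(\<lambda>h. \<Sum>j\<in>UNIV. h$j * ev (dx j (dm is e)) x) = (\<lambda>h. \<Sum>j\<in>UNIV. h$j * Dmulti (j # is) (ev e) x)"
    using ev_Dm[OF x, of "_ # is" e] by simp
  finally show "(Dmulti is (ev e) has_derivative (\<lambda>h. \<Sum>j\<in>UNIV. h$j * Dmulti (j # is) (ev e) x)) (at x)"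
    by (rule has_derivative_transform_within_open[of _ _ _ _ "-{0}"]) (use x in \<open>auto simp: ev_Dm\<close>)
qed

lemma good_dir:
  assumes "good f" "(x::real^'n::finite) \<noteq> 0"
  shows "((\<lambda>t. Dmulti is f (x + t *\<^sub>R v)) has_real_derivative (\<Sum>j\<in>UNIV. v$j * Dmulti (j # is) f x)) (at 0)"
  using assms unfolding good_def by (intro dir_deriv_sum) blast

definition LS :: "nat \<Rightarrow> 'n list set" where "LS n = {js. length js = n}"

lemma finite_LS: "finite (LS n :: 'n::finite list set)"
  using finite_lists_length_eq[of "UNIV :: 'n set" n] by (simp add: LS_def)

lemma LS_Suc: "LS (Suc n) = (\<lambda>(j,js). j # js) ` (UNIV \<times> LS n)"
  unfolding LS_def by (auto simp: length_Suc_conv image_iff)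

lemma sum_LS_Suc:
  "(\<Sum>js\<in>LS (Suc n). g js) = (\<Sum>j\<in>(UNIV::'n::finite set). \<Sum>js\<in>LS n. g (j # js))"
proof -
  have ij: "inj_on (\<lambda>(j,js). j # js) (UNIV \<times> (LS n :: 'n list set))" by (auto simp: inj_on_def)
  then have "(\<Sum>js\<in>LS (Suc n). g js) = (\<Sum>p\<in>UNIV \<times> LS n. g ((\<lambda>(j,js). j # js) p))"
    unfolding LS_Suc using sum.reindex[OF ij, of g] by (simp add: o_def)
  also have "\<dots> = (\<Sum>j\<in>(UNIV::'n::finite set). \<Sum>js\<in>LS n. g (j # js))"
    unfolding sum.cartesian_product by (rule sum.cong) auto
  finally show ?thesis .
qed

lemma LS_0: "LS 0 = {[]}" by (auto simp: LS_def)

fun cf :: "(real^'n::finite \<Rightarrow> real^'n) \<Rightarrow> 'n list \<Rightarrow> 'n list \<Rightarrow> real" where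
  "cf Q [] [] = 1"
| "cf Q (i # is) (j # js) = Q (axis i 1) $ j * cf Q is js"
| "cf Q _ _ = 0"

lemma chain:
  fixes f :: "real^'n::finite \<Rightarrow> real"
  assumes g: "good f" and Q: "linear Q" and inj: "\<And>y. Q y = 0 \<Longrightarrow> y = 0" and x: "x \<noteq> 0"
  shows "Dmulti is (\<lambda>y. f (Q y)) x = (\<Sum>js\<in>LS (length is). cf Q is js * Dmulti js f (Q x))"
  using x
proof (induction "is" arbitrary: x)
  case Nil
  then show ?case by (simp add: LS_0)
next
  case (Cons i "is")
  have Qx: "Q x \<noteq> 0" using Cons.prems inj by blast
  have "Dmulti (i # is) (\<lambda>y. f (Q y)) x = partial_coord i (Dmulti is (\<lambda>y. f (Q y))) x" by simp
  also have "\<dots> = partial_coord i (\<lambda>y. \<Sum>js\<in>LS (length is). cf Q is js * Dmulti js f (Q y)) x"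
    by (rule pc_local[of "-{0}"]) (use Cons in auto)
  also have "\<dots> = (\<Sum>js\<in>LS (length is). cf Q is js * (\<Sum>j\<in>UNIV. Q (axis i 1) $ j * Dmulti (j # js) f (Q x)))"
  proof -
    have "((\<lambda>t. \<Sum>js\<in>LS (length is). cf Q is js * Dmulti js f (Q x + t *\<^sub>R Q (axis i 1))) has_real_derivative
       (\<Sum>js\<in>LS (length is). cf Q is js * (\<Sum>j\<in>UNIV. Q (axis i 1) $ j * Dmulti (j # js) f (Q x)))) (at 0)"
      by (intro DERIV_sum DERIV_cmult good_dir[OF g Qx])
    moreover have e: "(\<lambda>t. \<Sum>js\<in>LS (length is). cf Q is js * Dmulti js f (Q (x + t *\<^sub>R axis i 1)))
       = (\<lambda>t. \<Sum>js\<in>LS (length is). cf Q is js * Dmulti js f (Q x + t *\<^sub>R Q (axis i 1)))"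
      using Q by (simp add: linear_add linear_scale)
    ultimately have "((\<lambda>t. \<Sum>js\<in>LS (length is). cf Q is js * Dmulti js f (Q (x + t *\<^sub>R axis i 1))) has_real_derivative
       (\<Sum>js\<in>LS (length is). cf Q is js * (\<Sum>j\<in>UNIV. Q (axis i 1) $ j * Dmulti (j # js) f (Q x)))) (at 0)"
      by (simp only: e)
    then show ?thesis unfolding partial_coord_def by (rule DERIV_imp_deriv)
  qed
  also have "\<dots> = (\<Sum>j\<in>UNIV. \<Sum>js\<in>LS (length is). cf Q (i # is) (j # js) * Dmulti (j # js) f (Q x))"
    unfolding sum_distrib_left by (subst sum.swap) (simp add: mult_ac)
  also have "\<dots> = (\<Sum>js\<in>LS (length (i # is)). cf Q (i # is) js * Dmulti js f (Q x))"
    by (simp add: sum_LS_Suc)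
  finally show ?case .
qed

lemma row_orth:
  fixes Q :: "real^'n::finite \<Rightarrow> real^'n"
  assumes "orthogonal_transformation Q"
  shows "(\<Sum>i\<in>UNIV. Q (axis i 1) $ j * Q (axis i 1) $ k) = (if j = k then 1 else 0)"
proof -
  have "orthogonal_matrix (matrix Q)" using assms orthogonal_transformation_matrix by blast
  then have "matrix Q ** transpose (matrix Q) = mat 1" by (simp add: orthogonal_matrix_def)
  then have "(matrix Q ** transpose (matrix Q)) $ j $ k = mat 1 $ j $ k" by simp
  then show ?thesis by (simp add: matrix_matrix_mult_def transpose_def matrix_def mat_def)
qed

lemma cf_orth:
  fixes Q :: "real^'n::finite \<Rightarrow> real^'n"
  assumes Q: "orthogonal_transformation Q"
  shows "length js = n \<Longrightarrow> length ks = n \<Longrightarrow>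
    (\<Sum>is\<in>LS n. cf Q is js * cf Q is ks) = (if js = ks then 1 else 0)"
proof (induction n arbitrary: js ks)
  case 0
  then show ?case by (simp add: LS_0)
next
  case (Suc n)
  then obtain j js' k ks' where js: "js = j # js'" "length js' = n" and ks: "ks = k # ks'" "length ks' = n"
    by (metis length_Suc_conv)
  have "(\<Sum>is\<in>LS (Suc n). cf Q is js * cf Q is ks)
      = (\<Sum>i\<in>UNIV. \<Sum>is\<in>LS n. (Q (axis i 1) $ j * Q (axis i 1) $ k) * (cf Q is js' * cf Q is ks'))"
    by (simp add: sum_LS_Suc js ks mult_ac)
  also have "\<dots> = (\<Sum>i\<in>UNIV. Q (axis i 1) $ j * Q (axis i 1) $ k) * (\<Sum>is\<in>LS n. cf Q is js' * cf Q is ks')"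
    by (simp only: sum_distrib_left[symmetric] sum_distrib_right[symmetric])
  also have "\<dots> = (if js = ks then 1 else 0)"
    by (simp add: row_orth[OF Q] Suc.IH js ks)
  finally show ?case .
qed

lemma mem: "js \<in> LS n \<Longrightarrow> length js = n" by (simp add: LS_def)

lemma sq_orth:
  fixes Q :: "real^'n::finite \<Rightarrow> real^'n"
  assumes Q: "orthogonal_transformation Q"
  shows "(\<Sum>is\<in>LS n. (\<Sum>js\<in>LS n. cf Q is js * a js)\<^sup>2) = (\<Sum>js\<in>LS n. (a js)\<^sup>2)"
proof -
  have "(\<Sum>is\<in>LS n. (\<Sum>js\<in>LS n. cf Q is js * a js)\<^sup>2)
     = (\<Sum>is\<in>LS n. \<Sum>js\<in>LS n. \<Sum>ks\<in>LS n. (cf Q is js * cf Q is ks) * (a js * a ks))"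
    by (simp add: power2_eq_square sum_product mult_ac)
  also have "\<dots> = (\<Sum>js\<in>LS n. \<Sum>ks\<in>LS n. (\<Sum>is\<in>LS n. cf Q is js * cf Q is ks) * (a js * a ks))"
    unfolding sum_distrib_right by (subst sum.swap) (rule sum.cong[OF refl], rule sum.swap)
  also have "\<dots> = (\<Sum>js\<in>LS n. \<Sum>ks\<in>LS n. (if js = ks then a js * a ks else 0))"
    by (intro sum.cong refl) (simp add: cf_orth[OF Q] mem)
  also have "\<dots> = (\<Sum>js\<in>LS n. (a js)\<^sup>2)"
    by (simp add: finite_LS power2_eq_square)
  finally show ?thesis .
qed

lemma cf_scale: "cf (\<lambda>y. c *\<^sub>R y) is js = (if is = js then c ^ length is else 0)"
proof (induction "is" arbitrary: js)
  case Nil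
  then show ?case by (cases js) auto
next
  case (Cons i "is")
  then show ?case by (cases js) (auto simp: axis_def)
qed

lemma good_pc:
  assumes "good f" "(x::real^'n::finite) \<noteq> 0"
  shows "((\<lambda>t. Dmulti is f (x + t *\<^sub>R axis i 1)) has_real_derivative Dmulti (i # is) f x) (at 0)"
proof -
  have "\<And>j. (axis i 1 :: real^'n)$j * Dmulti (j # is) f x = (if j = i then Dmulti (j # is) f x else 0)"
    by (simp add: axis_def)
  then have "(\<Sum>j\<in>UNIV. (axis i 1 :: real^'n)$j * Dmulti (j # is) f x) = Dmulti (i # is) f x" by simp
  then show ?thesis using good_dir[OF assms, of "is" "axis i 1"] by simp
qed

lemma lin:
  fixes f h :: "real^'n::finite \<Rightarrow> real"
  assumes g: "good f" and h: "\<And>y. y \<noteq> 0 \<Longrightarrow> h y = a * f y + b"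
  shows "x \<noteq> 0 \<Longrightarrow> Dmulti is h x = a * Dmulti is f x + (if is = [] then b else 0)"
proof (induction "is" arbitrary: x)
  case Nil
  then show ?case by (simp add: h)
next
  case (Cons i "is")
  define b' where "b' = (if is = [] then b else 0)"
  have "Dmulti (i # is) h x = partial_coord i (Dmulti is h) x" by simp
  also have "\<dots> = partial_coord i (\<lambda>y. a * Dmulti is f y + b') x"
    by (rule pc_local[of "-{0}"]) (use Cons in \<open>auto simp: b'_def\<close>)
  also have "\<dots> = a * Dmulti (i # is) f x"
  proof -
    have "((\<lambda>t. a * Dmulti is f (x + t *\<^sub>R axis i 1) + b') has_real_derivative a * Dmulti (i # is) f x + 0) (at 0)"
      by (intro DERIV_add DERIV_cmult good_pc[OF g Cons.prems] DERIV_const)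
    then show ?thesis unfolding partial_coord_def by (simp add: DERIV_imp_deriv)
  qed
  finally show ?case by simp
qed

definition Fs :: "(real^'n::finite \<Rightarrow> real) \<Rightarrow> nat \<Rightarrow> real^'n \<Rightarrow> real" where
  "Fs f k x = (\<Sum>is\<in>LS k. (Dmulti is f x)\<^sup>2)"

lemma Fs_nonneg: "Fs f k x \<ge> 0" unfolding Fs_def by (simp add: sum_nonneg)

lemma grad_Fs: "grad_norm k f x = sqrt (Fs f k x)"
  unfolding grad_norm_def Fs_def LS_def by simp

lemma rot:
  fixes f :: "real^'n::finite \<Rightarrow> real"
  assumes g: "good f" and Q: "orthogonal_transformation Q" and inv: "\<And>y. f (Q y) = f y" and x: "x \<noteq> 0"
  shows "Fs f k x = Fs f k (Q x)"
proof -
  have lQ: "linear Q" using Q orthogonal_transformation_linear by blast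
  have iQ: "\<And>y. Q y = 0 \<Longrightarrow> y = 0" using Q orthogonal_transformation_norm by (metis norm_eq_zero)
  have fe: "(\<lambda>y. f (Q y)) = f" using inv by auto
  have "\<And>is. is \<in> LS k \<Longrightarrow> Dmulti is f x = (\<Sum>js\<in>LS k. cf Q is js * Dmulti js f (Q x))"
    using chain[OF g lQ iQ x] fe by (metis mem)
  then have "Fs f k x = (\<Sum>is\<in>LS k. (\<Sum>js\<in>LS k. cf Q is js * Dmulti js f (Q x))\<^sup>2)"
    unfolding Fs_def by simp
  also have "\<dots> = Fs f k (Q x)" unfolding Fs_def by (rule sq_orth[OF Q])
  finally show ?thesis .
qed

lemma scale:
  fixes f :: "real^'n::finite \<Rightarrow> real"
  assumes g: "good f" and c: "c > 0" and x: "x \<noteq> 0"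
  shows "Dmulti is (\<lambda>y. f (c *\<^sub>R y)) x = c ^ length is * Dmulti is f (c *\<^sub>R x)"
proof -
  have lQ: "linear (\<lambda>y::real^'n. c *\<^sub>R y)" by (simp add: linear_scaleR)
  have iQ: "\<And>y::real^'n. c *\<^sub>R y = 0 \<Longrightarrow> y = 0" using c by simp
  have "Dmulti is (\<lambda>y. f (c *\<^sub>R y)) x = (\<Sum>js\<in>LS (length is). cf (\<lambda>y. c *\<^sub>R y) is js * Dmulti js f (c *\<^sub>R x))"
    by (rule chain[OF g lQ iQ x])
  also have "\<dots> = (\<Sum>js\<in>LS (length is). if is = js then c ^ length is * Dmulti js f (c *\<^sub>R x) else 0)"
    by (rule sum.cong) (auto simp: cf_scale)
  also have "\<dots> = c ^ length is * Dmulti is f (c *\<^sub>R x)"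
    by (subst sum.delta'[OF finite_LS]) (simp add: LS_def)
  finally show ?thesis .
qed

lemma radial_const:
  fixes f :: "real^'n::finite \<Rightarrow> real"
  assumes g: "good f" and inv: "\<And>Q y. orthogonal_transformation Q \<Longrightarrow> f (Q y) = f y"
    and sc: "\<And>c x. c > 0 \<Longrightarrow> x \<noteq> 0 \<Longrightarrow> Fs f k (c *\<^sub>R x) = c powr p * Fs f k x"
    and x: "x \<noteq> 0"
  shows "Fs f k x = norm x powr p * Fs f k (axis i 1)"
proof -
  define u where "u = x /\<^sub>R norm x"
  have nu: "norm u = norm (axis i 1 :: real^'n)" using x by (simp add: u_def)
  obtain Q :: "real^'n \<Rightarrow> real^'n" where Q: "orthogonal_transformation Q" "Q u = axis i 1"
    by (metis orthogonal_transformation_exists[OF nu])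
  have u0: "u \<noteq> 0" using x by (simp add: u_def)
  have "Fs f k u = Fs f k (axis i 1)" using rot[OF g Q(1) inv[OF Q(1)] u0] Q(2) by simp
  moreover have "x = norm x *\<^sub>R u" using x by (simp add: u_def)
  moreover have "norm x > 0" using x by simp
  ultimately show ?thesis using sc[of "norm x" u, OF _ u0] by simp
qed

lemma ev_P: "ev (P s) = (\<lambda>y. norm y powr s)" by auto
lemma ev_L: "ev Lg = (\<lambda>y. ln (norm y))" by auto

lemma ln_rep:
  fixes i :: "'n::finite"
  shows "t > 0 \<Longrightarrow> Dmulti (replicate (Suc m) i) (ev Lg) (t *\<^sub>R axis i 1) = (-1)^m * fact m / t^(Suc m)"
proof (induction m arbitrary: t)
  case 0
  have ne: "t *\<^sub>R axis i 1 \<noteq> (0::real^'n)" using 0 by (simp add: axis_eq_0_iff)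
  have "Dmulti [i] (ev Lg) (t *\<^sub>R axis i 1) = ev (dm [i] Lg) (t *\<^sub>R axis i 1)"
    by (rule ev_Dm[OF ne])
  also have "\<dots> = t * t powr (-2)" using 0 by simp
  also have "\<dots> = 1 / t" using 0 by (simp add: powr_minus powr_realpow power2_eq_square field_simps)
  finally have "Dmulti [i] (ev Lg) (t *\<^sub>R axis i 1) = 1 / t" .
  then show ?case by (simp add: ev_L)
next
  case (Suc m)
  define g where "g = (\<lambda>\<tau>::real. (-1)^m * fact m / (t + \<tau>)^(Suc m))"
  have "Dmulti (replicate (Suc (Suc m)) i) (ev Lg) (t *\<^sub>R axis i 1)
      = deriv (\<lambda>\<tau>. Dmulti (replicate (Suc m) i) (ev Lg) (t *\<^sub>R axis i 1 + \<tau> *\<^sub>R axis i 1)) 0"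
    by (simp add: partial_coord_def)
  also have "\<dots> = deriv g 0"
  proof (rule deriv_cong_ev)
    have "eventually (\<lambda>\<tau>. \<tau> \<in> {-t<..}) (nhds (0::real))"
      by (rule eventually_nhds_in_open) (use Suc.prems in auto)
    then show "eventually (\<lambda>\<tau>. Dmulti (replicate (Suc m) i) (ev Lg) (t *\<^sub>R axis i 1 + \<tau> *\<^sub>R axis i 1) = g \<tau>) (nhds 0)"
    proof eventually_elim
      case (elim \<tau>)
      then have "t + \<tau> > 0" by simp
      then show ?case using Suc.IH[of "t + \<tau>"] by (simp add: g_def scaleR_add_left ev_L)
    qed
  qed simp
  also have "\<dots> = (-1)^(Suc m) * fact (Suc m) / t^(Suc (Suc m))"
  proof (rule DERIV_imp_deriv)
    show "(g has_real_derivative (-1)^(Suc m) * fact (Suc m) / t^(Suc (Suc m))) (at 0)"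
    proof -
      have d: "((\<lambda>\<tau>. (t+\<tau>)^(Suc m)) has_real_derivative real (Suc m) * t^m) (at 0)"
        using DERIV_power[OF DERIV_add[OF DERIV_const[of t] DERIV_ident], of "Suc m" 0] by simp
      have "(g has_real_derivative (0 * (t+0)^(Suc m) - (-1)^m * fact m * (real (Suc m) * t^m)) / ((t+0)^(Suc m) * (t+0)^(Suc m))) (at 0)"
        unfolding g_def by (rule DERIV_divide[OF DERIV_const d]) (use Suc.prems in simp)
      moreover have "(0 * (t+0)^(Suc m) - (-1)^m * fact m * (real (Suc m) * t^m)) / ((t+0)^(Suc m) * (t+0)^(Suc m))
          = (-1)^(Suc m) * fact (Suc m) / t^(Suc (Suc m))"
        using Suc.prems by (simp add: field_simps power_add mult_ac)
      ultimately show ?thesis by simp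
    qed
  qed
  finally show ?case .
qed

lemma part1:
  fixes x :: "real^'n::finite"
  assumes x: "x \<noteq> 0"
  shows "(norm x powr (real k - s) * grad_norm k (\<lambda>y. norm y powr s) x)\<^sup>2
     = Fs (\<lambda>y. norm y powr s) k (axis undefined 1 :: real^'n)"
proof -
  define f where "f = (\<lambda>y::real^'n. norm y powr s)"
  have g: "good f" using good_ev[of "P s"] by (simp add: f_def ev_P)
  have sc: "Fs f k (c *\<^sub>R y) = c powr (2 * (s - real k)) * Fs f k y" if c: "c > 0" and y: "y \<noteq> 0" for c y
  proof -
    have "Dmulti is f (c *\<^sub>R y) = (c powr s / c ^ k) * Dmulti is f y" if "is \<in> LS k" for "is"
    proof -
      have "c ^ k * Dmulti is f (c *\<^sub>R y) = Dmulti is (\<lambda>z. f (c *\<^sub>R z)) y"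
        using scale[OF g c y, of "is"] that by (simp add: mem)
      also have "\<dots> = c powr s * Dmulti is f y + (if is = [] then 0 else 0)"
        by (rule lin[OF g _ y]) (use c in \<open>simp add: f_def powr_mult\<close>)
      finally show ?thesis using c by (simp add: field_simps)
    qed
    then have "Fs f k (c *\<^sub>R y) = (\<Sum>is\<in>LS k. (c powr s / c ^ k)\<^sup>2 * (Dmulti is f y)\<^sup>2)"
      unfolding Fs_def by (intro sum.cong refl) (simp add: power_mult_distrib power_divide)
    also have "\<dots> = (c powr s / c ^ k)\<^sup>2 * Fs f k y" unfolding Fs_def by (simp add: sum_distrib_left)
    also have "(c powr s / c ^ k)\<^sup>2 = c powr (2 * (s - real k))"
      using c by (simp add: powr_realpow[symmetric] powr_diff[symmetric] power2_eq_square powr_add[symmetric])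
    finally show ?thesis .
  qed
  have inv: "f (Q y) = f y" if "orthogonal_transformation Q" for Q y
    using that by (simp add: f_def orthogonal_transformation_norm)
  have F: "Fs f k x = norm x powr (2 * (s - real k)) * Fs f k (axis undefined 1)"
  proof (rule radial_const[where f=f and k=k and p="2 * (s - real k)"])
    show "good f" by (rule g)
    show "\<And>Q y. orthogonal_transformation Q \<Longrightarrow> f (Q y) = f y" by (rule inv)
    show "\<And>c y. 0 < c \<Longrightarrow> y \<noteq> 0 \<Longrightarrow> Fs f k (c *\<^sub>R y) = c powr (2 * (s - real k)) * Fs f k y" by (rule sc)
    show "x \<noteq> 0" by (rule x)
  qed
  have n: "norm x > 0" using x by simp
  have "(norm x powr (real k - s) * grad_norm k f x)\<^sup>2 = (norm x powr (real k - s))\<^sup>2 * Fs f k x"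
    by (simp add: grad_Fs power_mult_distrib Fs_nonneg)
  also have "\<dots> = (norm x powr (real k - s))\<^sup>2 * norm x powr (2 * (s - real k)) * Fs f k (axis undefined 1)"
    by (simp add: F)
  also have "(norm x powr (real k - s))\<^sup>2 * norm x powr (2 * (s - real k)) = 1"
    using n by (simp add: power2_eq_square powr_add[symmetric])
  finally show ?thesis by (simp add: f_def)
qed

lemma part2:
  fixes x :: "real^'n::finite"
  assumes x: "x \<noteq> 0" and k: "k \<ge> 1"
  shows "(norm x ^ k * grad_norm k (\<lambda>y. ln (norm y)) x)\<^sup>2
     = Fs (\<lambda>y. ln (norm y)) k (axis undefined 1 :: real^'n)"
proof -
  define f where "f = (\<lambda>y::real^'n. ln (norm y))"
  have g: "good f" using good_ev[of Lg] by (simp add: f_def ev_L)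
  have sc: "Fs f k (c *\<^sub>R y) = c powr (- 2 * real k) * Fs f k y" if c: "c > 0" and y: "y \<noteq> 0" for c y
  proof -
    have "Dmulti is f (c *\<^sub>R y) = (1 / c ^ k) * Dmulti is f y" if "is \<in> LS k" for "is"
    proof -
      have ne: "is \<noteq> []" using that k by (auto simp: LS_def)
      have "c ^ k * Dmulti is f (c *\<^sub>R y) = Dmulti is (\<lambda>z. f (c *\<^sub>R z)) y"
        using scale[OF g c y, of "is"] that by (simp add: mem)
      also have "\<dots> = 1 * Dmulti is f y + (if is = [] then ln c else 0)"
        by (rule lin[OF g _ y]) (use c in \<open>simp add: f_def ln_mult\<close>)
      finally show ?thesis using c ne by (simp add: field_simps)
    qed
    then have "Fs f k (c *\<^sub>R y) = (\<Sum>is\<in>LS k. (1 / c ^ k)\<^sup>2 * (Dmulti is f y)\<^sup>2)"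
      unfolding Fs_def by (intro sum.cong refl) (simp add: power_mult_distrib power_divide)
    also have "\<dots> = (1 / c ^ k)\<^sup>2 * Fs f k y" unfolding Fs_def by (simp add: sum_distrib_left)
    also have "(1 / c ^ k)\<^sup>2 = c powr (- 2 * real k)"
    proof -
      have e1: "- 2 * real k = - real k + - real k" by simp
      have "c powr (- 2 * real k) = c powr (- real k) * c powr (- real k)" by (simp only: e1 powr_add)
      also have "c powr (- real k) = inverse (c ^ k)" using c by (simp add: powr_minus powr_realpow)
      finally show ?thesis by (simp add: power2_eq_square divide_inverse)
    qed
    finally show ?thesis .
  qed
  have inv: "f (Q y) = f y" if "orthogonal_transformation Q" for Q y
    using that by (simp add: f_def orthogonal_transformation_norm)
  have F: "Fs f k x = norm x powr (- 2 * real k) * Fs f k (axis undefined 1)"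
  proof (rule radial_const[where f=f and k=k and p="- 2 * real k"])
    show "good f" by (rule g)
    show "\<And>Q y. orthogonal_transformation Q \<Longrightarrow> f (Q y) = f y" by (rule inv)
    show "\<And>c y. 0 < c \<Longrightarrow> y \<noteq> 0 \<Longrightarrow> Fs f k (c *\<^sub>R y) = c powr (- 2 * real k) * Fs f k y" by (rule sc)
    show "x \<noteq> 0" by (rule x)
  qed
  have n: "norm x > 0" using x by simp
  have "(norm x ^ k * grad_norm k f x)\<^sup>2 = (norm x ^ k)\<^sup>2 * Fs f k x"
    by (simp add: grad_Fs power_mult_distrib Fs_nonneg)
  also have "\<dots> = (norm x ^ k)\<^sup>2 * norm x powr (- 2 * real k) * Fs f k (axis undefined 1)"
    by (simp add: F)
  also have "(norm x ^ k)\<^sup>2 * norm x powr (- 2 * real k) = 1"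
    using n by (simp add: powr_realpow[symmetric] power2_eq_square powr_add[symmetric])
  finally show ?thesis by (simp add: f_def)
qed

lemma part2_pos:
  assumes k: "k \<ge> 1"
  shows "Fs (\<lambda>y. ln (norm y)) k (axis undefined 1 :: real^'n::finite) > 0"
proof -
  define i :: 'n where "i = undefined"
  obtain m where m: "k = Suc m" using k by (cases k) auto
  have "Dmulti (replicate k i) (ev Lg) (1 *\<^sub>R axis i 1) = (-1)^m * fact m / 1^(Suc m)"
    unfolding m by (rule ln_rep) simp
  then have d: "Dmulti (replicate k i) (\<lambda>y. ln (norm y)) (axis i 1) \<noteq> 0"
    by (simp add: ev_L)
  have "(Dmulti (replicate k i) (\<lambda>y. ln (norm y)) (axis i 1))\<^sup>2 \<le> Fs (\<lambda>y. ln (norm y)) k (axis i 1)"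
    unfolding Fs_def by (rule member_le_sum) (auto simp: finite_LS[unfolded LS_def] LS_def)
  moreover have "(Dmulti (replicate k i) (\<lambda>y. ln (norm y)) (axis i 1))\<^sup>2 > 0" using d by simp
  ultimately show ?thesis unfolding i_def by linarith
qed

theorem theorem1p1:
  shows "(\<forall>(k::nat) (s::real). \<exists>\<gamma>::real. \<gamma> \<ge> 0 \<and>
            (\<forall>x::real^'n. x \<noteq> 0 \<longrightarrow>
               (norm x powr (real k - s) * grad_norm k (\<lambda>y. norm y powr s) x)\<^sup>2 = \<gamma>))
       \<and> (\<forall>k::nat. k \<ge> 1 \<longrightarrow> (\<exists>L::real. L > 0 \<and>
            (\<forall>x::real^'n. x \<noteq> 0 \<longrightarrow>
               (norm x ^ k * grad_norm k (\<lambda>y. ln (norm y)) x)\<^sup>2 = L)))"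
proof (intro conjI allI impI)
  fix k :: nat and s :: real
  show "\<exists>\<gamma>::real. \<gamma> \<ge> 0 \<and> (\<forall>x::real^'n. x \<noteq> 0 \<longrightarrow>
               (norm x powr (real k - s) * grad_norm k (\<lambda>y. norm y powr s) x)\<^sup>2 = \<gamma>)"
    using part1 Fs_nonneg by blast
next
  fix k :: nat assume k: "k \<ge> 1"
  show "\<exists>L::real. L > 0 \<and> (\<forall>x::real^'n. x \<noteq> 0 \<longrightarrow>
               (norm x ^ k * grad_norm k (\<lambda>y. ln (norm y)) x)\<^sup>2 = L)"
    using part2[OF _ k] part2_pos[OF k] by blast
qed

end
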